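(* Fix a point with a symmetric positive definite matrix $g_{\alpha\beta}$ ($\alpha,\beta\in\{1,2\}$), $g=\det(g_{\alpha\beta})$, inverse $g^{\alpha\beta}$. Let $P=P(\rho,e)$ be a smooth pressure law, $U=(\rho,v^1,v^2,V^3,e)^T$ with $\rho>0$, $E=e+\tfrac12\left(g_{\alpha\beta}v^\alpha v^\beta+(V^3)^2\right)$, and assume $PP_e+\rho^2P_\rho>0$, $c=\frac{\sqrt{PP_e+\rho^2P_\rho}}{\rho}$. Let $A_0$ be the Jacobian with respect to $U$ of $Q(U)=\big(\rho\sqrt g,\ \rho\sqrt g\,v^1,\ \rho\sqrt g\,v^2,\ \rho\sqrt g\,V^3,\ \rho\sqrt g\,E\big)^T$, and for $\alpha=1,2$ let $A^\alpha$ be the Jacobian with respect to $U$ of $$F^\alpha(U)=\Big(\rho\sqrt g\,v^\alpha,\ \sqrt g[\rho v^1v^\alpha+g^{1\alpha}P],\ \sqrt g[\rho v^2v^\alpha+g^{2\alpha}P],\ \rho\sqrt g\,V^3v^\alpha,\ \sqrt g[\rho E+P]v^\alpha\Big)^T$$ (with $g_{\alpha\beta}$ held fixed). Set $\bar A^\alpha=A_0^{-1}A^\alpha$. For every covector $(w_1,w_2)$ with $g^{\alpha\beta}w_\alpha w_\beta=1$, the eigenvalues of $\bar A_w=w_1\bar A^1+w_2\bar A^2$ are $$v^\alpha w_\alpha,\ v^\alpha w_\alpha,\ v^\alpha w_\alpha,\ v^\alpha w_\alpha+c,\ v^\alpha w_\alpha-c.$$ In particular the pseudo-time-dependent system $A_0U_t+A^1U_{\xi^1}+A^2U_{\xi^2}=0$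 is everywhere non-strictly hyperbolic.
   Context: A first-order system $U_t+\sum_\alpha\bar A^\alpha U_{\xi^\alpha}=0$ is non-strictly hyperbolic if for every unit (co)vector $w$ the eigenvalues of $\sum_\alpha w_\alpha\bar A^\alpha$ are all real but not all distinct. Einstein summation over repeated Greek indices in $\{1,2\}$ is used. The system arises from reinserting (nonphysical) pseudo-time derivatives of the conserved quantities into the steady conical Euler equations on the unit sphere. *)

theory Defs
  imports "HOL-Analysis.Analysis" "HOL-Library.Numeral_Type"
begin

text \<open>State vector U = (rho, v1, v2, V3, e) as an element of real^5,
  components u$1 .. u$5.  The metric g_{ab} is a 2x2 matrix gm, its inverse is gi.\<close>

definition specE :: "real^2^2 \<Rightarrow> real^5 \<Rightarrow> real" where
  "specE gm u = u$5 + (1/2) * ((\<Sum>a\<in>UNIV. \<Sum>b\<in>UNIV. gm$a$b * u$(if a = 1 then 2 else 3) * u$(if b = 1 then 2 else 3)) + (u$4)^2)"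

definition vel :: "real^5 \<Rightarrow> real^2" where
  "vel u = vector [u$2, u$3]"

definition consQ :: "real^2^2 \<Rightarrow> real^5 \<Rightarrow> real^5" where
  "consQ gm u = (let sqg = sqrt (det gm) :: real; r = u$1 in
     vector [r* sqg, r* sqg* u$2, r* sqg* u$3, r* sqg* u$4, r* sqg* specE gm u])"

definition fluxF :: "real^2^2 \<Rightarrow> (real \<times> real \<Rightarrow> real) \<Rightarrow> 2 \<Rightarrow> real^5 \<Rightarrow> real^5" where
  "fluxF gm P al u = (let sqg = sqrt (det gm) :: real; gi = matrix_inv gm; r = u$1; p = P (u$1, u$5);
      va = vel u $ al in
     vector [r* sqg* va,
             sqg* (r* u$2* va + gi$1$al* p),
             sqg* (r* u$3* va + gi$2$al* p),
             r* sqg* u$4* va,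
             sqg* (r* specE gm u + p)* va])"

text \<open>Characteristic polynomial det(x I - M) equals prod (x - l) over the list ls, i.e. the
  eigenvalues of M, counted with algebraic multiplicity, are exactly the entries of ls.\<close>
definition eigenvalues_are :: "real^5^5 \<Rightarrow> real list \<Rightarrow> bool" where
  "eigenvalues_are M ls \<longleftrightarrow> length ls = 5 \<and>
     (\<forall>x::real. det (mat x - M) = (\<Prod>l\<leftarrow>ls. x - l))"

text \<open>Non-strict hyperbolicity of U_t + Abar^a U_{xi^a} = 0 w.r.t. the metric with inverse gi:
  for every unit covector w the eigenvalues of w_a Abar^a are all real but not all distinct.\<close>
definition nonstrictly_hyperbolic :: "real^2^2 \<Rightarrow> real^5^5 \<Rightarrow> real^5^5 \<Rightarrow> bool" where
  "nonstrictly_hyperbolic gi B1 B2 \<longleftrightarrow>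
     (\<forall>w::real^2. w \<bullet> (gi *v w) = 1 \<longrightarrow>
        (\<exists>ls. eigenvalues_are ((w$1) *\<^sub>R B1 + (w$2) *\<^sub>R B2) ls \<and> \<not> distinct ls))"

end

theory Submission
  imports Defs
begin

lemma exhaust_5:
  fixes x :: 5
  shows "x = 1 \<or> x = 2 \<or> x = 3 \<or> x = 4 \<or> x = 5"
proof (induct x)
  case (of_int z)
  then have "z = 0 \<or> z = 1 \<or> z = 2 \<or> z = 3 \<or> z = 4" by fastforce
  then show ?case by auto
qed
lemma UNIV_5: "UNIV = {1, 2, 3, 4, 5::5}"
  using exhaust_5 by auto
lemma vector_5 [simp]:
 "(vector [a,b,c,d,e] ::('a::zero)^5)$1 = a"
 "(vector [a,b,c,d,e] ::('a::zero)^5)$2 = b"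
 "(vector [a,b,c,d,e] ::('a::zero)^5)$3 = c"
 "(vector [a,b,c,d,e] ::('a::zero)^5)$4 = d"
 "(vector [a,b,c,d,e] ::('a::zero)^5)$5 = e"
  unfolding vector_def by simp_all
lemma sum_5: "sum f (UNIV::5 set) = f 1 + f 2 + f 3 + f 4 + f 5"
  unfolding UNIV_5 by (simp add: ac_simps)
lemma det_5: "det (A::'a::comm_ring_1^5^5) =
    A$1$1 * A$2$2 * A$3$3 * A$4$4 * A$5$5
    - A$1$1 * A$2$2 * A$3$3 * A$4$5 * A$5$4
    - A$1$1 * A$2$2 * A$3$4 * A$4$3 * A$5$5
    + A$1$1 * A$2$2 * A$3$4 * A$4$5 * A$5$3
    + A$1$1 * A$2$2 * A$3$5 * A$4$3 * A$5$4
    - A$1$1 * A$2$2 * A$3$5 * A$4$4 * A$5$3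
    - A$1$1 * A$2$3 * A$3$2 * A$4$4 * A$5$5
    + A$1$1 * A$2$3 * A$3$2 * A$4$5 * A$5$4
    + A$1$1 * A$2$3 * A$3$4 * A$4$2 * A$5$5
    - A$1$1 * A$2$3 * A$3$4 * A$4$5 * A$5$2
    - A$1$1 * A$2$3 * A$3$5 * A$4$2 * A$5$4
    + A$1$1 * A$2$3 * A$3$5 * A$4$4 * A$5$2
    + A$1$1 * A$2$4 * A$3$2 * A$4$3 * A$5$5
    - A$1$1 * A$2$4 * A$3$2 * A$4$5 * A$5$3
    - A$1$1 * A$2$4 * A$3$3 * A$4$2 * A$5$5
    + A$1$1 * A$2$4 * A$3$3 * A$4$5 * A$5$2
    + A$1$1 * A$2$4 * A$3$5 * A$4$2 * A$5$3
    - A$1$1 * A$2$4 * A$3$5 * A$4$3 * A$5$2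
    - A$1$1 * A$2$5 * A$3$2 * A$4$3 * A$5$4
    + A$1$1 * A$2$5 * A$3$2 * A$4$4 * A$5$3
    + A$1$1 * A$2$5 * A$3$3 * A$4$2 * A$5$4
    - A$1$1 * A$2$5 * A$3$3 * A$4$4 * A$5$2
    - A$1$1 * A$2$5 * A$3$4 * A$4$2 * A$5$3
    + A$1$1 * A$2$5 * A$3$4 * A$4$3 * A$5$2
    - A$1$2 * A$2$1 * A$3$3 * A$4$4 * A$5$5
    + A$1$2 * A$2$1 * A$3$3 * A$4$5 * A$5$4
    + A$1$2 * A$2$1 * A$3$4 * A$4$3 * A$5$5
    - A$1$2 * A$2$1 * A$3$4 * A$4$5 * A$5$3
    - A$1$2 * A$2$1 * A$3$5 * A$4$3 * A$5$4
    + A$1$2 * A$2$1 * A$3$5 * A$4$4 * A$5$3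
    + A$1$2 * A$2$3 * A$3$1 * A$4$4 * A$5$5
    - A$1$2 * A$2$3 * A$3$1 * A$4$5 * A$5$4
    - A$1$2 * A$2$3 * A$3$4 * A$4$1 * A$5$5
    + A$1$2 * A$2$3 * A$3$4 * A$4$5 * A$5$1
    + A$1$2 * A$2$3 * A$3$5 * A$4$1 * A$5$4
    - A$1$2 * A$2$3 * A$3$5 * A$4$4 * A$5$1
    - A$1$2 * A$2$4 * A$3$1 * A$4$3 * A$5$5
    + A$1$2 * A$2$4 * A$3$1 * A$4$5 * A$5$3
    + A$1$2 * A$2$4 * A$3$3 * A$4$1 * A$5$5
    - A$1$2 * A$2$4 * A$3$3 * A$4$5 * A$5$1
    - A$1$2 * A$2$4 * A$3$5 * A$4$1 * A$5$3
    + A$1$2 * A$2$4 * A$3$5 * A$4$3 * A$5$1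
    + A$1$2 * A$2$5 * A$3$1 * A$4$3 * A$5$4
    - A$1$2 * A$2$5 * A$3$1 * A$4$4 * A$5$3
    - A$1$2 * A$2$5 * A$3$3 * A$4$1 * A$5$4
    + A$1$2 * A$2$5 * A$3$3 * A$4$4 * A$5$1
    + A$1$2 * A$2$5 * A$3$4 * A$4$1 * A$5$3
    - A$1$2 * A$2$5 * A$3$4 * A$4$3 * A$5$1
    + A$1$3 * A$2$1 * A$3$2 * A$4$4 * A$5$5
    - A$1$3 * A$2$1 * A$3$2 * A$4$5 * A$5$4
    - A$1$3 * A$2$1 * A$3$4 * A$4$2 * A$5$5
    + A$1$3 * A$2$1 * A$3$4 * A$4$5 * A$5$2
    + A$1$3 * A$2$1 * A$3$5 * A$4$2 * A$5$4
    - A$1$3 * A$2$1 * A$3$5 * A$4$4 * A$5$2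
    - A$1$3 * A$2$2 * A$3$1 * A$4$4 * A$5$5
    + A$1$3 * A$2$2 * A$3$1 * A$4$5 * A$5$4
    + A$1$3 * A$2$2 * A$3$4 * A$4$1 * A$5$5
    - A$1$3 * A$2$2 * A$3$4 * A$4$5 * A$5$1
    - A$1$3 * A$2$2 * A$3$5 * A$4$1 * A$5$4
    + A$1$3 * A$2$2 * A$3$5 * A$4$4 * A$5$1
    + A$1$3 * A$2$4 * A$3$1 * A$4$2 * A$5$5
    - A$1$3 * A$2$4 * A$3$1 * A$4$5 * A$5$2
    - A$1$3 * A$2$4 * A$3$2 * A$4$1 * A$5$5
    + A$1$3 * A$2$4 * A$3$2 * A$4$5 * A$5$1
    + A$1$3 * A$2$4 * A$3$5 * A$4$1 * A$5$2
    - A$1$3 * A$2$4 * A$3$5 * A$4$2 * A$5$1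
    - A$1$3 * A$2$5 * A$3$1 * A$4$2 * A$5$4
    + A$1$3 * A$2$5 * A$3$1 * A$4$4 * A$5$2
    + A$1$3 * A$2$5 * A$3$2 * A$4$1 * A$5$4
    - A$1$3 * A$2$5 * A$3$2 * A$4$4 * A$5$1
    - A$1$3 * A$2$5 * A$3$4 * A$4$1 * A$5$2
    + A$1$3 * A$2$5 * A$3$4 * A$4$2 * A$5$1
    - A$1$4 * A$2$1 * A$3$2 * A$4$3 * A$5$5
    + A$1$4 * A$2$1 * A$3$2 * A$4$5 * A$5$3
    + A$1$4 * A$2$1 * A$3$3 * A$4$2 * A$5$5
    - A$1$4 * A$2$1 * A$3$3 * A$4$5 * A$5$2
    - A$1$4 * A$2$1 * A$3$5 * A$4$2 * A$5$3
    + A$1$4 * A$2$1 * A$3$5 * A$4$3 * A$5$2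
    + A$1$4 * A$2$2 * A$3$1 * A$4$3 * A$5$5
    - A$1$4 * A$2$2 * A$3$1 * A$4$5 * A$5$3
    - A$1$4 * A$2$2 * A$3$3 * A$4$1 * A$5$5
    + A$1$4 * A$2$2 * A$3$3 * A$4$5 * A$5$1
    + A$1$4 * A$2$2 * A$3$5 * A$4$1 * A$5$3
    - A$1$4 * A$2$2 * A$3$5 * A$4$3 * A$5$1
    - A$1$4 * A$2$3 * A$3$1 * A$4$2 * A$5$5
    + A$1$4 * A$2$3 * A$3$1 * A$4$5 * A$5$2
    + A$1$4 * A$2$3 * A$3$2 * A$4$1 * A$5$5
    - A$1$4 * A$2$3 * A$3$2 * A$4$5 * A$5$1
    - A$1$4 * A$2$3 * A$3$5 * A$4$1 * A$5$2
    + A$1$4 * A$2$3 * A$3$5 * A$4$2 * A$5$1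
    + A$1$4 * A$2$5 * A$3$1 * A$4$2 * A$5$3
    - A$1$4 * A$2$5 * A$3$1 * A$4$3 * A$5$2
    - A$1$4 * A$2$5 * A$3$2 * A$4$1 * A$5$3
    + A$1$4 * A$2$5 * A$3$2 * A$4$3 * A$5$1
    + A$1$4 * A$2$5 * A$3$3 * A$4$1 * A$5$2
    - A$1$4 * A$2$5 * A$3$3 * A$4$2 * A$5$1
    + A$1$5 * A$2$1 * A$3$2 * A$4$3 * A$5$4
    - A$1$5 * A$2$1 * A$3$2 * A$4$4 * A$5$3
    - A$1$5 * A$2$1 * A$3$3 * A$4$2 * A$5$4
    + A$1$5 * A$2$1 * A$3$3 * A$4$4 * A$5$2
    + A$1$5 * A$2$1 * A$3$4 * A$4$2 * A$5$3
    - A$1$5 * A$2$1 * A$3$4 * A$4$3 * A$5$2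
    - A$1$5 * A$2$2 * A$3$1 * A$4$3 * A$5$4
    + A$1$5 * A$2$2 * A$3$1 * A$4$4 * A$5$3
    + A$1$5 * A$2$2 * A$3$3 * A$4$1 * A$5$4
    - A$1$5 * A$2$2 * A$3$3 * A$4$4 * A$5$1
    - A$1$5 * A$2$2 * A$3$4 * A$4$1 * A$5$3
    + A$1$5 * A$2$2 * A$3$4 * A$4$3 * A$5$1
    + A$1$5 * A$2$3 * A$3$1 * A$4$2 * A$5$4
    - A$1$5 * A$2$3 * A$3$1 * A$4$4 * A$5$2
    - A$1$5 * A$2$3 * A$3$2 * A$4$1 * A$5$4
    + A$1$5 * A$2$3 * A$3$2 * A$4$4 * A$5$1
    + A$1$5 * A$2$3 * A$3$4 * A$4$1 * A$5$2
    - A$1$5 * A$2$3 * A$3$4 * A$4$2 * A$5$1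
    - A$1$5 * A$2$4 * A$3$1 * A$4$2 * A$5$3
    + A$1$5 * A$2$4 * A$3$1 * A$4$3 * A$5$2
    + A$1$5 * A$2$4 * A$3$2 * A$4$1 * A$5$3
    - A$1$5 * A$2$4 * A$3$2 * A$4$3 * A$5$1
    - A$1$5 * A$2$4 * A$3$3 * A$4$1 * A$5$2
    + A$1$5 * A$2$4 * A$3$3 * A$4$2 * A$5$1"
proof -
  have f1: "finite {2::5, 3, 4, 5}" "1 \<notin> {2::5, 3, 4, 5}" by auto
  have f2: "finite {3::5, 4, 5}" "2 \<notin> {3::5, 4, 5}" by auto
  have f3: "finite {4::5, 5}" "3 \<notin> {4::5, 5}" by auto
  have f4: "finite {5::5}" "4 \<notin> {5::5}" by auto
  show ?thesis
    unfolding det_def UNIV_5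
    unfolding sum_over_permutations_insert[OF f1]
    unfolding sum_over_permutations_insert[OF f2]
    unfolding sum_over_permutations_insert[OF f3]
    unfolding sum_over_permutations_insert[OF f4]
    unfolding permutes_sing
    by (simp add: sign_swap_id permutation_swap_id sign_compose permutation_compose sign_id swap_id_eq)
qed

definition B1p :: "real \<Rightarrow> real \<Rightarrow> real \<Rightarrow> real \<Rightarrow> real \<Rightarrow> real \<Rightarrow> real \<Rightarrow> real^5^5" where
  "B1p r v1 p Pr Pe a11 a21 = vector[vector[v1, r, 0,0,0], vector[a11 * Pr / r, v1, 0,0, a11 * Pe / r],
     vector[a21 * Pr / r, 0, v1, 0, a21 * Pe / r], vector[0,0,0,v1,0], vector[0, p / r, 0,0,v1]]"
definition B2p :: "real \<Rightarrow> real \<Rightarrow> real \<Rightarrow> real \<Rightarrow> real \<Rightarrow> real \<Rightarrow> real \<Rightarrow> real^5^5" where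
  "B2p r v2 p Pr Pe a12 a22 = vector[vector[v2, 0, r,0,0], vector[a12 * Pr / r, v2, 0,0, a12 * Pe / r],
     vector[a22 * Pr / r, 0, v2, 0, a22 * Pe / r], vector[0,0,0,v2,0], vector[0, 0, p / r,0,v2]]"
lemma charpoly:
  fixes r v1 v2 p Pr Pe a11 a12 a21 a22 w1 w2 x :: real
  assumes r: "r > 0"
  shows "det (mat x - (w1 *\<^sub>R B1p r v1 p Pr Pe a11 a21 + w2 *\<^sub>R B2p r v2 p Pr Pe a12 a22)) = (x - (v1 * w1+v2 * w2))^3 *
     ((x - (v1 * w1+v2 * w2))^2 - (w1 * (a11 * w1 + a12 * w2) + w2 * (a21 * w1 + a22 * w2)) * (Pr + p * Pe / r^2))"
  unfolding det_5 B1p_def B2p_def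
  using r by (simp add: mat_def field_simps power2_eq_square power3_eq_cube)


lemma forall_5: "(\<forall>i::5. P i) \<longleftrightarrow> P 1 \<and> P 2 \<and> P 3 \<and> P 4 \<and> P 5"
  by (metis exhaust_5)

lemma sum_2': "sum f (UNIV::2 set) = f 1 + f 2"
  unfolding UNIV_2 by simp

lemma vec_nth_has_derivative [derivative_intros]:
  "((\<lambda>x. x $ i) has_derivative (\<lambda>h. h $ i)) F"
  by (rule bounded_linear_imp_has_derivative[OF bounded_linear_vec_nth])

lemma deriv5:
  fixes f :: "real^'n \<Rightarrow> real^5"
  assumes "\<And>k. ((\<lambda>x. f x $ k) has_derivative (\<lambda>h. (A  *v h) $ k)) (at a)"
  shows "(f has_derivative (\<lambda>h. A  *v h)) (at a)"
proof -
  have "\<forall>i\<in>Basis. ((\<lambda>x. f x  \<bullet> i) has_derivative (\<lambda>h. (A  *v h)  \<bullet> i)) (at a within UNIV)"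
  proof
    fix i :: "real^5" assume "i \<in> Basis"
    then obtain k where "i = axis k 1" by (auto simp: Basis_vec_def)
    then show "((\<lambda>x. f x  \<bullet> i) has_derivative (\<lambda>h. (A  *v h)  \<bullet> i)) (at a within UNIV)"
      using assms[of k] by (simp add: inner_axis)
  qed
  then show ?thesis using has_derivative_componentwise_within[of f "\<lambda>h. A  *v h" a UNIV] by simp
qed

definition d2 :: "real^2^2 \<Rightarrow> real^5 \<Rightarrow> real" where
  "d2 gm u = gm$1$1 * u$2 + (gm$1$2+gm$2$1)/2 * u$3"
definition d3 :: "real^2^2 \<Rightarrow> real^5 \<Rightarrow> real" where
  "d3 gm u = (gm$1$2+gm$2$1)/2 * u$2 + gm$2$2 * u$3"

lemma specE_eq: "specE gm u = u$5 + 1/2 * (gm$1$1 * u$2 * u$2 + gm$1$2 * u$2 * u$3 + gm$2$1 * u$3 * u$2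
   + gm$2$2 * u$3 * u$3 + (u$4)^2)"
  unfolding specE_def sum_2' by simp

lemma specE_deriv [derivative_intros]:
  "((specE gm) has_derivative (\<lambda>h. h$5 + d2 gm u  *  h$2 + d3 gm u  *  h$3 + u$4 * h$4)) (at u)"
  unfolding specE_eq[abs_def] d2_def d3_def
  by (auto intro!: derivative_eq_intros ext simp: field_simps power2_eq_square)

definition A0m :: "real^2^2 \<Rightarrow> real^5 \<Rightarrow> real^5^5" where
  "A0m gm u = (let s = sqrt (det gm); r = u$1 in vector[ vector[s,0,0,0,0], vector[s * u$2, s * r,0,0,0],
     vector[s * u$3,0,s * r,0,0], vector[s * u$4,0,0,s * r,0],
     vector[s * specE gm u, s * r * d2 gm u, s * r * d3 gm u, s * r * u$4, s * r]])"

lemma consQ_deriv: "(consQ gm has_derivative (\<lambda>h. A0m gm U  *v h)) (at U)"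
proof (rule deriv5)
  fix k
  have "\<forall>k. ((\<lambda>x. consQ gm x $ k) has_derivative (\<lambda>h. (A0m gm U  *v h) $ k)) (at U)"
    unfolding forall_5
    by (simp add: consQ_def A0m_def Let_def matrix_vector_mult_def sum_5;
        auto intro!: derivative_eq_intros ext simp: algebra_simps)
  then show "((\<lambda>x. consQ gm x $ k) has_derivative (\<lambda>h. (A0m gm U  *v h) $ k)) (at U)" by blast
qed

definition A1m :: "real^2^2 \<Rightarrow> (real \<times> real \<Rightarrow> real) \<Rightarrow> real \<Rightarrow> real \<Rightarrow> real^5 \<Rightarrow> real^5^5" where
  "A1m gm P Pr Pe u = (let s = sqrt (det gm); r = u$1; gi = matrix_inv gm; a1 = gi$1$1; a2 = gi$2$1;
     p = P (u$1, u$5); E = specE gm u; va = u$2 in vector[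
     vector[s * va, s * r, 0, 0, 0],
     vector[s * (u$2 * va + a1 * Pr), s * (r * va + r * u$2), 0, 0, s * a1 * Pe],
     vector[s * (u$3 * va + a2 * Pr), s * r * u$3, s * r * va, 0, s * a2 * Pe],
     vector[s * u$4 * va, s * r * u$4, 0, s * r * va, 0],
     vector[s * (E + Pr) * va, s * (r * d2 gm u * va + (r * E + p)), s * r * d3 gm u * va, s * r * u$4 * va, s * (r + Pe) * va]])"

definition A2m :: "real^2^2 \<Rightarrow> (real \<times> real \<Rightarrow> real) \<Rightarrow> real \<Rightarrow> real \<Rightarrow> real^5 \<Rightarrow> real^5^5" where
  "A2m gm P Pr Pe u = (let s = sqrt (det gm); r = u$1; gi = matrix_inv gm; a1 = gi$1$2; a2 = gi$2$2;
     p = P (u$1, u$5); E = specE gm u; va = u$3 in vector[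
     vector[s * va, 0, s * r, 0, 0],
     vector[s * (u$2 * va + a1 * Pr), s * r * va, s * r * u$2, 0, s * a1 * Pe],
     vector[s * (u$3 * va + a2 * Pr), 0, s * (r * va + r * u$3), 0, s * a2 * Pe],
     vector[s * u$4 * va, 0, s * r * u$4, s * r * va, 0],
     vector[s * (E + Pr) * va, s * r * d2 gm u * va, s * (r * d3 gm u * va + (r * E + p)), s * r * u$4 * va, s * (r + Pe) * va]])"

lemma P_comp:
  assumes "(P has_derivative (\<lambda>h. Pr * fst h + Pe * snd h)) (at (U$1, U$5))"
  shows "((\<lambda>u. P (u$1, u$5)) has_derivative (\<lambda>h. Pr * h$1 + Pe * h$5)) (at U)"
proof -
  have "((\<lambda>u. (u$1, u$5)) has_derivative (\<lambda>h. (h$1, h$5))) (at U)"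
    by (auto intro!: derivative_eq_intros)
  from has_derivative_compose[OF this assms] show ?thesis by simp
qed

lemma flux1_deriv:
  assumes "(P has_derivative (\<lambda>h. Pr * fst h + Pe * snd h)) (at (U$1, U$5))"
  shows "(fluxF gm P 1 has_derivative (\<lambda>h. A1m gm P Pr Pe U *v h)) (at U)"
proof (rule deriv5)
  fix k
  note Pd = P_comp[OF assms]
  have "\<forall>k. ((\<lambda>x. fluxF gm P 1 x $ k) has_derivative (\<lambda>h. (A1m gm P Pr Pe U *v h) $ k)) (at U)"
    unfolding forall_5
    by (simp add: fluxF_def vel_def A1m_def Let_def matrix_vector_mult_def sum_5;
        auto intro!: derivative_eq_intros Pd ext simp: algebra_simps)
  then show "((\<lambda>x. fluxF gm P 1 x $ k) has_derivative (\<lambda>h. (A1m gm P Pr Pe U *v h) $ k)) (at U)" by blast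
qed

lemma flux2_deriv:
  assumes "(P has_derivative (\<lambda>h. Pr * fst h + Pe * snd h)) (at (U$1, U$5))"
  shows "(fluxF gm P 2 has_derivative (\<lambda>h. A2m gm P Pr Pe U *v h)) (at U)"
proof (rule deriv5)
  fix k
  note Pd = P_comp[OF assms]
  have "\<forall>k. ((\<lambda>x. fluxF gm P 2 x $ k) has_derivative (\<lambda>h. (A2m gm P Pr Pe U *v h) $ k)) (at U)"
    unfolding forall_5
    by (simp add: fluxF_def vel_def A2m_def Let_def matrix_vector_mult_def sum_5;
        auto intro!: derivative_eq_intros Pd ext simp: algebra_simps)
  then show "((\<lambda>x. fluxF gm P 2 x $ k) has_derivative (\<lambda>h. (A2m gm P Pr Pe U *v h) $ k)) (at U)" by blast
qed



lemma dkeys: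
  fixes gm :: "real^2^2"
  assumes ids: "gm$1$2 = gm$2$1" "gm$1$1 * gi$1$1 + gm$1$2 * gi$2$1 = 1"
     "gm$1$1 * gi$1$2 + gm$1$2 * gi$2$2 = 0" "gm$2$1 * gi$1$1 + gm$2$2 * gi$2$1 = 0"
     "gm$2$1 * gi$1$2 + gm$2$2 * gi$2$2 = 1"
  shows "\<And>c s. c * (s * (d2 gm u * gi$1$1)) + c * (s * (d3 gm u * gi$2$1)) = c * (s * u$2)"
    "\<And>c s. c * (s * (d2 gm u * gi$1$2)) + c * (s * (d3 gm u * gi$2$2)) = c * (s * u$3)"
proof -
  have k1: "d2 gm u * gi$1$1 + d3 gm u * gi$2$1 = u$2 * (gm$1$1 * gi$1$1 + gm$1$2 * gi$2$1) + u$3 * (gm$2$1 * gi$1$1 + gm$2$2 * gi$2$1)"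
    by (simp add: d2_def d3_def ids(1) algebra_simps)
  have k2: "d2 gm u * gi$1$2 + d3 gm u * gi$2$2 = u$2 * (gm$1$1 * gi$1$2 + gm$1$2 * gi$2$2) + u$3 * (gm$2$1 * gi$1$2 + gm$2$2 * gi$2$2)"
    by (simp add: d2_def d3_def ids(1) algebra_simps)
  fix c s
  show "c * (s * (d2 gm u * gi$1$1)) + c * (s * (d3 gm u * gi$2$1)) = c * (s * u$2)"
    using k1 ids by (simp add: distrib_left[symmetric])
  show "c * (s * (d2 gm u * gi$1$2)) + c * (s * (d3 gm u * gi$2$2)) = c * (s * u$3)"
    using k2 ids by (simp add: distrib_left[symmetric])
qed

lemma A0B1:
  fixes gm :: "real^2^2"
  assumes ids: "gm$1$2 = gm$2$1" "gm$1$1 * gi$1$1 + gm$1$2 * gi$2$1 = 1"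
     "gm$1$1 * gi$1$2 + gm$1$2 * gi$2$2 = 0" "gm$2$1 * gi$1$1 + gm$2$2 * gi$2$1 = 0"
     "gm$2$1 * gi$1$2 + gm$2$2 * gi$2$2 = 1"
   and gi: "gi = matrix_inv gm" and r: "u$1 > 0"
  shows "A0m gm u ** B1p (u$1) (u$2) (P (u$1, u$5)) Pr Pe (gi$1$1) (gi$2$1) = A1m gm P Pr Pe u"
  unfolding vec_eq_iff forall_5 gi[symmetric]
  using r dkeys[OF ids] by (simp add: A0m_def A1m_def B1p_def Let_def matrix_matrix_mult_def sum_5 gi[symmetric] field_simps)

lemma A0B2:
  fixes gm :: "real^2^2"
  assumes ids: "gm$1$2 = gm$2$1" "gm$1$1 * gi$1$1 + gm$1$2 * gi$2$1 = 1"
     "gm$1$1 * gi$1$2 + gm$1$2 * gi$2$2 = 0" "gm$2$1 * gi$1$1 + gm$2$2 * gi$2$1 = 0"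
     "gm$2$1 * gi$1$2 + gm$2$2 * gi$2$2 = 1"
   and gi: "gi = matrix_inv gm" and r: "u$1 > 0"
  shows "A0m gm u ** B2p (u$1) (u$3) (P (u$1, u$5)) Pr Pe (gi$1$2) (gi$2$2) = A2m gm P Pr Pe u"
  unfolding vec_eq_iff forall_5 gi[symmetric]
  using r dkeys[OF ids] by (simp add: A0m_def A2m_def B2p_def Let_def matrix_matrix_mult_def sum_5 gi[symmetric] field_simps)



lemma det_A0m: "det (A0m gm u) = sqrt (det gm) ^ 5 * (u$1) ^ 4"
  unfolding det_5 A0m_def Let_def by (simp add: power_def)


lemma gm_sym12:
  fixes gm :: "real^2^2"
  assumes sym: "transpose gm = gm"
  shows "gm$1$2 = gm$2$1"
proof -
  have "transpose gm $ 1 $ 2 = gm $ 1 $ 2" using sym by simp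
  then show ?thesis by (simp add: transpose_def)
qed

lemma gm_g11:
  fixes gm :: "real^2^2"
  assumes posdef: "\<forall>x::real^2. x \<noteq> 0 \<longrightarrow> x \<bullet> (gm *v x) > 0"
  shows "gm$1$1 > 0"
proof -
  have "axis 1 1 \<noteq> (0::real^2)" by (simp add: axis_eq_0_iff)
  with posdef have "axis 1 1 \<bullet> (gm *v axis 1 1) > 0" by blast
  then show ?thesis by (simp add: inner_vec_def matrix_vector_mult_def sum_2' axis_def)
qed

lemma gm_detpos:
  fixes gm :: "real^2^2"
  assumes sym: "transpose gm = gm"
    and posdef: "\<forall>x::real^2. x \<noteq> 0 \<longrightarrow> x \<bullet> (gm *v x) > 0"
  shows "det gm > 0"
proof -
  note sym12 = gm_sym12[OF sym]
  note g11 = gm_g11[OF posdef]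
  define x where "x = (vector [gm$1$2, - gm$1$1] :: real^2)"
  have "x $ 2 \<noteq> 0" using g11 by (simp add: x_def)
  then have "x \<noteq> 0" by auto
  with posdef have "x \<bullet> (gm *v x) > 0" by blast
  then have "gm$1$1 * det gm > 0"
    by (simp add: x_def det_2 inner_vec_def matrix_vector_mult_def sum_2' sym12 algebra_simps power2_eq_square)
  with g11 show ?thesis by (simp add: zero_less_mult_iff)
qed

lemma inv_right: "invertible (A::real^'n^'n) \<Longrightarrow> A ** matrix_inv A = mat 1"
  unfolding invertible_def matrix_inv_def by (metis (mono_tags, lifting) someI_ex)

lemma inv_left: "invertible (A::real^'n^'n) \<Longrightarrow> matrix_inv A ** A = mat 1"
  unfolding invertible_def matrix_inv_def by (metis (mono_tags, lifting) someI_ex)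

lemma gm_ids:
  fixes gm :: "real^2^2"
  assumes sym: "transpose gm = gm"
    and posdef: "\<forall>x::real^2. x \<noteq> 0 \<longrightarrow> x \<bullet> (gm *v x) > 0"
    and gi: "gi = matrix_inv gm"
  shows "gm$1$2 = gm$2$1" "gm$1$1 * gi$1$1 + gm$1$2 * gi$2$1 = 1"
     "gm$1$1 * gi$1$2 + gm$1$2 * gi$2$2 = 0" "gm$2$1 * gi$1$1 + gm$2$2 * gi$2$1 = 0"
     "gm$2$1 * gi$1$2 + gm$2$2 * gi$2$2 = 1"
proof -
  have "invertible gm" using gm_detpos[OF sym posdef] by (simp add: invertible_det_nz)
  then have gmgi: "gm ** gi = mat 1" using inv_right gi by blast
  show "gm$1$2 = gm$2$1" "gm$1$1 * gi$1$1 + gm$1$2 * gi$2$1 = 1"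
     "gm$1$1 * gi$1$2 + gm$1$2 * gi$2$2 = 0" "gm$2$1 * gi$1$1 + gm$2$2 * gi$2$1 = 0"
     "gm$2$1 * gi$1$2 + gm$2$2 * gi$2$2 = 1"
    using gm_sym12[OF sym] gmgi by (auto simp: vec_eq_iff forall_2 matrix_matrix_mult_def sum_2' mat_def)
qed

lemma prod_list_eq:
  fixes x u c :: real
  shows "(x - u)^3 * ((x - u)^2 - c^2) = (\<Prod>l\<leftarrow>[u, u, u, u + c, u - c]. x - l)"
  by (simp add: power2_eq_square power3_eq_cube algebra_simps)

lemma eig_lemma:
  fixes gi :: "real^2^2" and w v :: "real^2" and r p Pr Pe c :: real
  assumes r: "r > 0" and w: "w \<bullet> (gi *v w) = 1" and c2: "c^2 = Pr + p * Pe / r^2"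
  shows "eigenvalues_are ((w$1) *\<^sub>R B1p r (v$1) p Pr Pe (gi$1$1) (gi$2$1) + (w$2) *\<^sub>R B2p r (v$2) p Pr Pe (gi$1$2) (gi$2$2))
                 [v \<bullet> w, v \<bullet> w, v \<bullet> w, v \<bullet> w + c, v \<bullet> w - c]"
proof -
  have w': "w$1 * (gi$1$1 * w$1 + gi$1$2 * w$2) + w$2 * (gi$2$1 * w$1 + gi$2$2 * w$2) = 1"
    using w by (simp add: inner_vec_def matrix_vector_mult_def sum_2' algebra_simps)
  have vw: "v$1 * w$1 + v$2 * w$2 = v \<bullet> w" by (simp add: inner_vec_def sum_2')
  have "\<forall>x. det (mat x - ((w$1) *\<^sub>R B1p r (v$1) p Pr Pe (gi$1$1) (gi$2$1) + (w$2) *\<^sub>R B2p r (v$2) p Pr Pe (gi$1$2) (gi$2$2)))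
     = (x - v \<bullet> w)^3 * ((x - v \<bullet> w)^2 - c^2)"
    unfolding charpoly[OF r] w' vw c2 by simp
  then show ?thesis unfolding eigenvalues_are_def prod_list_eq by simp
qed

lemma jac_eq: "(f has_derivative (\<lambda>h. (A::real^'n^'m) *v h)) (at x) \<Longrightarrow> jacobian f (at x) = A"
  unfolding jacobian_def by (metis frechet_derivative_at matrix_of_matrix_vector_mul)

theorem mainTheorem4:
  fixes gm :: "real^2^2" and P :: "real \<times> real \<Rightarrow> real"
    and Pr Pe \<rho> e V3 :: real and v :: "real^2"
  assumes sym: "transpose gm = gm"
    and posdef: "\<forall>x::real^2. x \<noteq> 0 \<longrightarrow> x \<bullet> (gm *v x) > 0"
    and rho_pos: "\<rho> > 0"
    and P_deriv: "(P has_derivative (\<lambda>h. Pr * fst h + Pe * snd h)) (at (\<rho>, e))"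
    and sound: "P (\<rho>, e) * Pe + \<rho>^2 * Pr > 0"
  defines "c \<equiv> sqrt (P (\<rho>, e) * Pe + \<rho>^2 * Pr) / \<rho>"
  shows "let U = (vector [\<rho>, v$1, v$2, V3, e] :: real^5);
             gi = matrix_inv gm;
             A0 = jacobian (consQ gm) (at U);
             A1 = jacobian (fluxF gm P 1) (at U);
             A2 = jacobian (fluxF gm P 2) (at U);
             B1 = matrix_inv A0 ** A1;
             B2 = matrix_inv A0 ** A2
         in (\<forall>w::real^2. w \<bullet> (gi *v w) = 1 \<longrightarrow>
               eigenvalues_are ((w$1) *\<^sub>R B1 + (w$2) *\<^sub>R B2)
                 [v \<bullet> w, v \<bullet> w, v \<bullet> w, v \<bullet> w + c, v \<bullet> w - c])
            \<and> nonstrictly_hyperbolic gi B1 B2"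
proof -
  define U where "U = (vector [\<rho>, v$1, v$2, V3, e] :: real^5)"
  define gi where "gi = matrix_inv gm"
  have U1: "U$1 = \<rho>" "U$2 = v$1" "U$3 = v$2" "U$4 = V3" "U$5 = e" by (simp_all add: U_def)
  note ids = gm_ids[OF sym posdef gi_def]
  have sg: "sqrt (det gm) > 0" using gm_detpos[OF sym posdef] by simp
  have Pd: "(P has_derivative (\<lambda>h. Pr * fst h + Pe * snd h)) (at (U$1, U$5))"
    using P_deriv U1 by simp
  have J0: "jacobian (consQ gm) (at U) = A0m gm U"
    by (rule jac_eq[OF consQ_deriv])
  have J1: "jacobian (fluxF gm P 1) (at U) = A1m gm P Pr Pe U"
    by (rule jac_eq[OF flux1_deriv[OF Pd]])
  have J2: "jacobian (fluxF gm P 2) (at U) = A2m gm P Pr Pe U"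
    by (rule jac_eq[OF flux2_deriv[OF Pd]])
  have "det (A0m gm U) \<noteq> 0" using sg rho_pos by (simp add: det_A0m U1)
  then have "invertible (A0m gm U)" by (simp add: invertible_det_nz)
  then have inv0: "matrix_inv (A0m gm U) ** A0m gm U = mat 1" by (rule inv_left)
  define B1 where "B1 = B1p \<rho> (v$1) (P (\<rho>, e)) Pr Pe (gi$1$1) (gi$2$1)"
  define B2 where "B2 = B2p \<rho> (v$2) (P (\<rho>, e)) Pr Pe (gi$1$2) (gi$2$2)"
  have E1: "matrix_inv (A0m gm U) ** A1m gm P Pr Pe U = B1"
    using A0B1[OF ids gi_def, of U P Pr Pe] rho_pos inv0
    by (metis U1 B1_def matrix_mul_assoc matrix_mul_lid)
  have E2: "matrix_inv (A0m gm U) ** A2m gm P Pr Pe U = B2"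
    using A0B2[OF ids gi_def, of U P Pr Pe] rho_pos inv0
    by (metis U1 B2_def matrix_mul_assoc matrix_mul_lid)
  have c2: "c^2 = Pr + P (\<rho>, e) * Pe / \<rho>^2"
    using sound rho_pos unfolding c_def by (simp add: power_divide field_simps)
  have main: "\<forall>w::real^2. w \<bullet> (gi *v w) = 1 \<longrightarrow>
               eigenvalues_are ((w$1) *\<^sub>R B1 + (w$2) *\<^sub>R B2)
                 [v \<bullet> w, v \<bullet> w, v \<bullet> w, v \<bullet> w + c, v \<bullet> w - c]"
    unfolding B1_def B2_def using eig_lemma[OF rho_pos _ c2] by blast
  have nsh: "nonstrictly_hyperbolic gi B1 B2"
    unfolding nonstrictly_hyperbolic_def using main by fastforce
  show ?thesis
    unfolding Let_def U_def[symmetric] gi_def[symmetric] J0 J1 J2 E1 E2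
    using main nsh by blast
qed


thm_deps mainTheorem4

end
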